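(* Let $n,k\ge 1$ be integers and let $M=V^{\otimes k}\otimes (V^* )^{\otimes k}$, where $V=\mathbb{C}^n$. For $1\le i\le k$ let $p_i=\frac1n c_{i,i}$. Then $$\ker p_1\cap \ker p_2\cap\cdots\cap \ker p_k=(\mathrm{id}-p_1)(\mathrm{id}-p_2)\cdots(\mathrm{id}-p_k)M .$$
   Context: $V=\mathbb{C}^n$ is the space of $n\times 1$ column vectors with standard basis $v_1,\dots,v_n$; $V^*$ is the space of $1\times n$ row vectors with dual basis $v_1^*,\dots,v_n^*$ ($v_i^*$ has a $1$ in column $i$ and $0$ elsewhere). For $1\le i,j\le k$ the contraction map $c_{i,j}:M\to M$ is the linear map $$c_{i,j}(u_1\otimes\cdots\otimes u_k\otimes w_1^*\otimes\cdots\otimes w_k^* )=(w_j^*u_i)\sum_{\ell=1}^n u_1\otimes\cdots\otimes v_\ell\otimes\cdots\otimes u_k\otimes w_1^*\otimes\cdots\otimes v_\ell^*\otimes\cdots\otimes w_k^*,$$ where $v_\ell$ replaces $u_i$ in the $i$th slot of $V^{\otimes k}$, $v_\ell^*$ replaces $w_j^*$ in the $j$th slot of $(V^* )^{\otimes k}$, and $w_j^*u_i\in\mathbb{C}$ is the matrix product (equal to $\mathrm{tr}(u_iw_j^* )$). One has $c_{i,i}^2=nc_{i,i}$, so $p_i$ is an idempotent; $\mathrm{id}$ is the identity map of $M$. *)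

theory Defs
  imports Complex_Main
begin

text \<open>Index tuples: a list of length k with entries in {0..<n}; entry m (0-based) of the list
  is the index of the basis vector in slot m+1.\<close>
definition idx :: "nat \<Rightarrow> nat \<Rightarrow> nat list set" where
  "idx n k = {xs. length xs = k \<and> set xs \<subseteq> {..<n}}"

text \<open>An element of M = V^(tensor k) tensor (V*)^(tensor k) is given by its coordinates
  w.r.t. the basis v_a1 x ... x v_ak x v_b1* x ... x v_bk*, indexed by pairs (a,b).\<close>
type_synonym tensor = "nat list \<times> nat list \<Rightarrow> complex"

definition tensM :: "nat \<Rightarrow> nat \<Rightarrow> tensor set" where
  "tensM n k = {T. \<forall>ab. ab \<notin> idx n k \<times> idx n k \<longrightarrow> T ab = 0}"

definition basis_t :: "nat list \<Rightarrow> nat list \<Rightarrow> tensor" where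
  "basis_t a b = (\<lambda>x. if x = (a, b) then 1 else 0)"

text \<open>Contraction c_{i,j} (1 <= i,j <= k), defined on basis tensors as in the paper
  (w_j^* u_i = [a_i = b_j], v_l replaces slot i, v_l^* replaces slot j) and extended linearly.\<close>
definition contr :: "nat \<Rightarrow> nat \<Rightarrow> nat \<Rightarrow> nat \<Rightarrow> tensor \<Rightarrow> tensor" where
  "contr n k i j T = (\<lambda>x. \<Sum>ab\<in>idx n k \<times> idx n k.
      T ab * (if fst ab ! (i - 1) = snd ab ! (j - 1) then 1 else 0) *
      (\<Sum>l<n. basis_t ((fst ab)[i - 1 := l]) ((snd ab)[j - 1 := l]) x))"

definition proj :: "nat \<Rightarrow> nat \<Rightarrow> nat \<Rightarrow> tensor \<Rightarrow> tensor" where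
  "proj n k i T = (\<lambda>x. contr n k i i T x / of_nat n)"

text \<open>(id - p_1)(id - p_2)...(id - p_k), composed as operators (p_k applied first).\<close>
definition prod_op :: "nat \<Rightarrow> nat \<Rightarrow> tensor \<Rightarrow> tensor" where
  "prod_op n k = foldr (\<lambda>i f. (\<lambda>T x. T x - proj n k i T x) \<circ> f) [1..<k+1] id"

end

theory Submission
  imports Defs
begin

definition Q :: "nat \<Rightarrow> nat \<Rightarrow> nat \<Rightarrow> tensor \<Rightarrow> tensor" where
  "Q n k p T = (\<lambda>x. if fst x \<in> idx n k \<and> snd x \<in> idx n k \<and> fst x ! p = snd x ! p
     then (\<Sum>m<n. T ((fst x)[p:=m], (snd x)[p:=m])) else 0)"

lemma finite_idx: "finite (idx n k)"
proof -
  have "idx n k \<subseteq> {xs. set xs \<subseteq> {..<n} \<and> length xs = k}" by (auto simp: idx_def)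
  moreover have "finite {xs. set xs \<subseteq> {..<n} \<and> length xs = k}"
    by (rule finite_lists_length_eq) simp
  ultimately show ?thesis by (rule finite_subset)
qed

lemma idx_upd: "a \<in> idx n k \<Longrightarrow> m < n \<Longrightarrow> a[p:=m] \<in> idx n k"
  unfolding idx_def using set_update_subset_insert by fastforce

lemma contr_Q:
  assumes pk: "p < k"
  shows "contr n k (Suc p) (Suc p) T = Q n k p T"
proof
  fix x :: "nat list \<times> nat list"
  obtain a' b' where x: "x = (a', b')" by force
  let ?I = "idx n k \<times> idx n k"
  let ?P = "\<lambda>l ab. fst ab ! p = snd ab ! p \<and> (fst ab)[p:=l] = a' \<and> (snd ab)[p:=l] = b'"
  have "contr n k (Suc p) (Suc p) T x =
     (\<Sum>ab\<in>?I. \<Sum>l<n. (if ?P l ab then T ab else 0))"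
    unfolding contr_def x
    by (rule sum.cong) (auto simp: sum_distrib_left basis_t_def intro!: sum.cong)
  also have "\<dots> = (\<Sum>l<n. \<Sum>ab\<in>?I. (if ?P l ab then T ab else 0))"
    by (rule sum.swap)
  also have "\<dots> = Q n k p T x"
  proof (cases "a' \<in> idx n k \<and> b' \<in> idx n k \<and> a' ! p = b' ! p")
    case False
    have "(if ?P l ab then T ab else 0) = 0" if "l < n" "ab \<in> ?I" for l ab
    proof (rule ccontr)
      assume "(if ?P l ab then T ab else 0) \<noteq> 0"
      hence P: "?P l ab" by (auto split: if_splits)
      have "length (fst ab) = k" "length (snd ab) = k" using that by (auto simp: idx_def)
      then show False using P False that idx_upd[of "fst ab" n k l p] idx_upd[of "snd ab" n k l p] pk
        by auto
    qed
    then have "(\<Sum>l<n. \<Sum>ab\<in>?I. (if ?P l ab then T ab else 0)) = 0"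
      by (intro sum.neutral ballI) simp
    moreover have "Q n k p T x = 0" using False unfolding Q_def x by auto
    ultimately show ?thesis by simp
  next
    case True
    let ?l = "a' ! p"
    have ln: "?l < n" "length a' = k" "length b' = k" using True pk by (auto simp: idx_def dest!: nth_mem)
    have "(\<Sum>l<n. \<Sum>ab\<in>?I. (if ?P l ab then T ab else 0))
        = (\<Sum>l<n. if l = ?l then (\<Sum>ab\<in>?I. (if ?P ?l ab then T ab else 0)) else 0)"
    proof (rule sum.cong)
      fix l assume "l \<in> {..<n}"
      show "(\<Sum>ab\<in>?I. (if ?P l ab then T ab else 0)) =
        (if l = ?l then (\<Sum>ab\<in>?I. (if ?P ?l ab then T ab else 0)) else 0)"
      proof (cases "l = ?l")
        case False
        have "?P l ab \<Longrightarrow> ab \<in> ?I \<Longrightarrow> False" for ab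
          using False pk by (auto simp: idx_def)
        then have "\<forall>ab\<in>?I. (if ?P l ab then T ab else 0) = 0" by (metis (no_types, lifting))
        then show ?thesis using False by (simp add: sum.neutral)
      qed simp
    qed simp
    also have "\<dots> = (\<Sum>ab\<in>?I. (if ?P ?l ab then T ab else 0))"
      using ln by simp
    also have "\<dots> = (\<Sum>ab\<in>{ab\<in>?I. ?P ?l ab}. T ab)"
      by (simp add: sum.inter_filter finite_idx)
    also have "{ab\<in>?I. ?P ?l ab} = (\<lambda>m. (a'[p:=m], b'[p:=m])) ` {..<n}"
    proof (intro equalityI subsetI)
      fix ab assume "ab \<in> {ab\<in>?I. ?P ?l ab}"
      then obtain a b where ab: "ab = (a,b)" "a \<in> idx n k" "b \<in> idx n k" "a!p = b!p"
        "a[p:=?l] = a'" "b[p:=?l] = b'" by auto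
      have "a = a'[p:=a!p]" using ab(5) by (metis list_update_id list_update_overwrite)
      moreover have "b = b'[p:=a!p]" using ab(4,6) by (metis list_update_id list_update_overwrite)
      moreover have "a!p < n" using ab pk by (auto simp: idx_def dest!: nth_mem)
      ultimately show "ab \<in> (\<lambda>m. (a'[p:=m], b'[p:=m])) ` {..<n}" using ab by blast
    next
      fix ab assume "ab \<in> (\<lambda>m. (a'[p:=m], b'[p:=m])) ` {..<n}"
      then obtain m where "m < n" "ab = (a'[p:=m], b'[p:=m])" by auto
      then show "ab \<in> {ab\<in>?I. ?P ?l ab}" using True ln pk idx_upd by (auto, metis list_update_id)
    qed
    also have "(\<Sum>ab\<in>(\<lambda>m. (a'[p:=m], b'[p:=m])) ` {..<n}. T ab) = (\<Sum>m<n. T (a'[p:=m], b'[p:=m]))"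
    proof (rule sum.reindex_cong[OF _ refl refl])
      show "inj_on (\<lambda>m. (a'[p:=m], b'[p:=m])) {..<n}"
        by (rule inj_onI) (metis ln(2) pk nth_list_update_eq prod.inject)
    qed
    finally show ?thesis using True by (simp add: Q_def x)
  qed
  finally show "contr n k (Suc p) (Suc p) T x = Q n k p T x" .
qed


lemma Q_out: "x \<notin> idx n k \<times> idx n k \<Longrightarrow> Q n k p T x = 0"
  by (cases x) (auto simp: Q_def)

lemma Q_diff: "Q n k p (\<lambda>x. S x - R x) = (\<lambda>x. Q n k p S x - Q n k p R x)"
  by (auto simp: Q_def sum_subtractf)

lemma Q_div: "Q n k p (\<lambda>x. S x / c) = (\<lambda>x. Q n k p S x / c)"
  by (auto simp: Q_def sum_divide_distrib)

lemma Q_zero: "Q n k p (\<lambda>x. 0) = (\<lambda>x. 0)"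
  by (auto simp: Q_def)

lemma Q_Q_neq:
  assumes "p \<noteq> r"
  shows "Q n k p (Q n k r T) (a,b) = (if a \<in> idx n k \<and> b \<in> idx n k \<and> a!p = b!p \<and> a!r = b!r
     then (\<Sum>m<n. \<Sum>m'<n. T ((a[p:=m])[r:=m'], (b[p:=m])[r:=m'])) else 0)"
  using assms by (auto simp: Q_def idx_upd nth_list_update_neq intro!: sum.cong)

lemma Q_comm:
  assumes "p \<noteq> r"
  shows "Q n k p (Q n k r T) = Q n k r (Q n k p T)"
proof
  fix x :: "nat list \<times> nat list"
  obtain a b where x: "x = (a,b)" by force
  have "(\<Sum>m<n. \<Sum>m'<n. T ((a[p:=m])[r:=m'], (b[p:=m])[r:=m'])) =
        (\<Sum>m'<n. \<Sum>m<n. T ((a[r:=m'])[p:=m], (b[r:=m'])[p:=m]))"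
    using assms by (subst sum.swap) (simp add: list_update_swap)
  then show "Q n k p (Q n k r T) x = Q n k r (Q n k p T) x"
    unfolding x using assms by (simp add: Q_Q_neq[OF assms] Q_Q_neq[of r p] conj_commute conj_left_commute)
qed

lemma Q_idem:
  assumes "p < k"
  shows "Q n k p (Q n k p T) = (\<lambda>x. of_nat n * Q n k p T x)"
proof
  fix x :: "nat list \<times> nat list"
  obtain a b where x: "x = (a,b)" by force
  show "Q n k p (Q n k p T) x = of_nat n * Q n k p T x"
  proof (cases "a \<in> idx n k \<and> b \<in> idx n k \<and> a!p = b!p")
    case True
    then have l: "p < length a" "p < length b" using assms by (auto simp: idx_def)
    have "Q n k p (Q n k p T) x = (\<Sum>m<n. Q n k p T (a[p:=m], b[p:=m]))"
      using True unfolding x Q_def fst_conv snd_conv by (simp del: list_update_overwrite)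
    also have "\<dots> = (\<Sum>m<n. Q n k p T (a, b))"
      using True l by (intro sum.cong refl) (simp add: Q_def idx_upd)
    finally show ?thesis by (simp add: x)
  qed (auto simp: Q_def x)
qed

lemma proj_Q: "i \<in> {1..k} \<Longrightarrow> proj n k i T = (\<lambda>x. Q n k (i - 1) T x / of_nat n)"
  using contr_Q[of "i - 1" k n T] by (auto simp: proj_def)

lemma proj_tensM: "i \<in> {1..k} \<Longrightarrow> proj n k i T \<in> tensM n k"
  by (simp add: proj_Q tensM_def Q_out)

lemma proj_diff: "i \<in> {1..k} \<Longrightarrow> proj n k i (\<lambda>x. S x - R x) = (\<lambda>x. proj n k i S x - proj n k i R x)"
  by (simp add: proj_Q Q_diff diff_divide_distrib)

lemma proj_zero: "i \<in> {1..k} \<Longrightarrow> proj n k i (\<lambda>x. 0) = (\<lambda>x. 0)"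
  by (simp add: proj_Q Q_zero)

lemma proj_comm: "i \<in> {1..k} \<Longrightarrow> j \<in> {1..k} \<Longrightarrow> proj n k i (proj n k j T) = proj n k j (proj n k i T)"
  apply (cases "i = j")
   apply simp
  apply (simp add: proj_Q Q_div)
  apply (subst Q_comm)
   apply auto
  done

lemma proj_idem: assumes "n \<ge> 1" "i \<in> {1..k}" shows "proj n k i (proj n k i T) = proj n k i T"
proof -
  have "i - 1 < k" using assms by auto
  then show ?thesis using assms by (simp add: proj_Q Q_div Q_idem)
qed


definition F :: "nat \<Rightarrow> nat \<Rightarrow> nat list \<Rightarrow> tensor \<Rightarrow> tensor" where
  "F n k L = foldr (\<lambda>i f. (\<lambda>T x. T x - proj n k i T x) \<circ> f) L id"

lemma F_Cons: "F n k (j # L) T = (\<lambda>x. F n k L T x - proj n k j (F n k L T) x)"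
  by (simp add: F_def)

lemma F_tensM: "set L \<subseteq> {1..k} \<Longrightarrow> T \<in> tensM n k \<Longrightarrow> F n k L T \<in> tensM n k"
proof (induction L)
  case Nil then show ?case by (simp add: F_def)
next
  case (Cons j L)
  then have "F n k L T \<in> tensM n k" "proj n k j (F n k L T) \<in> tensM n k"
    using proj_tensM by auto
  then show ?case by (simp add: F_Cons tensM_def)
qed

lemma F_fix: "set L \<subseteq> {1..k} \<Longrightarrow> \<forall>i\<in>set L. proj n k i T = (\<lambda>_. 0) \<Longrightarrow> F n k L T = T"
proof (induction L)
  case Nil then show ?case by (simp add: F_def)
next
  case (Cons j L)
  then show ?case by (simp add: F_Cons)
qed

lemma F_kill: "n \<ge> 1 \<Longrightarrow> set L \<subseteq> {1..k} \<Longrightarrow> i \<in> set L \<Longrightarrow> proj n k i (F n k L T) = (\<lambda>_. 0)"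
proof (induction L)
  case Nil then show ?case by simp
next
  case (Cons j L)
  have ik: "i \<in> {1..k}" "j \<in> {1..k}" using Cons.prems by auto
  let ?S = "F n k L T"
  have "proj n k i (F n k (j # L) T) = (\<lambda>x. proj n k i ?S x - proj n k i (proj n k j ?S) x)"
    unfolding F_Cons by (rule proj_diff[OF ik(1)])
  also have "\<dots> = (\<lambda>_. 0)"
  proof (cases "i = j")
    case True
    then show ?thesis using proj_idem[OF Cons.prems(1) ik(1)] by simp
  next
    case False
    then have "proj n k i ?S = (\<lambda>_. 0)" using Cons by auto
    moreover have "proj n k i (proj n k j ?S) = proj n k j (proj n k i ?S)"
      using proj_comm ik by blast
    ultimately show ?thesis using proj_zero[OF ik(2)] by simp
  qed
  finally show ?case .
qed

theorem proposition1p5: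
  fixes n k :: nat
  assumes "n \<ge> 1" and "k \<ge> 1"
  shows "{T \<in> tensM n k. \<forall>i\<in>{1..k}. proj n k i T = (\<lambda>_. 0)} = prod_op n k ` tensM n k"
proof -
  have P: "prod_op n k = F n k [1..<k+1]" by (simp add: prod_op_def F_def)
  have L: "set [1..<k+1] = {1..k}" by auto
  show ?thesis
  proof (intro equalityI subsetI)
    fix T assume "T \<in> {T \<in> tensM n k. \<forall>i\<in>{1..k}. proj n k i T = (\<lambda>_. 0)}"
    then have "T \<in> tensM n k" "F n k [1..<k+1] T = T" using F_fix[of "[1..<k+1]" k n T] L by auto
    then show "T \<in> prod_op n k ` tensM n k" unfolding P by (metis image_eqI)
  next
    fix S assume "S \<in> prod_op n k ` tensM n k"
    then obtain T where T: "T \<in> tensM n k" "S = F n k [1..<k+1] T" unfolding P by auto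
    have "S \<in> tensM n k" using F_tensM[of "[1..<k+1]" k T n] L T by simp
    moreover have "proj n k i S = (\<lambda>_. 0)" if "i \<in> {1..k}" for i
    proof -
      have "i \<in> set [1..<k+1]" using that L by blast
      then show ?thesis using F_kill[OF assms(1), of "[1..<k+1]" k i T] L T(2) by blast
    qed
    ultimately show "S \<in> {T \<in> tensM n k. \<forall>i\<in>{1..k}. proj n k i T = (\<lambda>_. 0)}"
      by blast
  qed
qed

end
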